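(* Let $\alpha\in[0,1]$ be irrational, $\theta\in[0,1)$ and $\lambda\in\mathbb{R}$, and for $k\in\mathbb{Z}$ let $\theta_k:=k\alpha\bmod 1$. Choose $p\in[1,\infty]$, $\varepsilon>0$ and $D\in\mathbb{N}$ such that $\varepsilon>2\|H_{\lambda,\alpha,0}\|(4/D)^{1/p}$ if $p<\infty$, and $\varepsilon>2\|H_{\lambda,\alpha,0}\|/D$ if $p=\infty$. Then \[\inf_{k\in\mathbb{Z}}\nu\big((H_{\lambda,\alpha,\theta_k})_+\big)\ge\min_{k\in\mathbb{Z}}\nu\big([H_{\lambda,\alpha,\theta_k}]_D\big)-\varepsilon.\]
   Context: $(H_{\lambda,\alpha,\psi}x)_n=x_{n+1}+x_{n-1}+\lambda v_{\alpha,\psi}(n)x_n$ on $\ell^p(\mathbb{Z})$ with $v_{\alpha,\psi}(n)=\chi_{[1-\alpha,1)}(n\alpha+\psi\bmod 1)$. For $A=(a_{ij})$, $A_+=(a_{ij})_{i,j=0}^\infty$ on $\ell^p(\{0,1,\dots\})$, and $[A]_D:\mathbb{C}^{D+1}\to\mathbb{C}^{D+2}$ denotes the restriction of $A_+$ to sequences supported in $\{0,\dots,D\}$ (i.e. $A_+\chi_{[0,D]}$ with the natural embeddings; its image is supported in $\{0,\dots,D+1\}$), with $p$-norms. Lower norm $\nu(B)=\inf\{\|Bx\|:\|x\|=1\}$. *)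

theory Defs
  imports "HOL-Analysis.Analysis"
begin

text \<open>Exponent p in [1,\<infinity>] is an extended real; p = \<infinity> is the sup-norm case.
  Sequences are complex-valued functions on an index set S (int for \<ell>^p(Z), nat for \<ell>^p({0,1,...})).\<close>

definition lp_mem :: "ereal \<Rightarrow> 'i set \<Rightarrow> ('i \<Rightarrow> complex) \<Rightarrow> bool" where
  "lp_mem p S x = (if p = \<infinity> then bdd_above ((\<lambda>n. norm (x n)) ` S)
                   else (\<lambda>n. norm (x n) powr real_of_ereal p) summable_on S)"

definition lp_norm :: "ereal \<Rightarrow> 'i set \<Rightarrow> ('i \<Rightarrow> complex) \<Rightarrow> real" where
  "lp_norm p S x = (if p = \<infinity> then (SUP n\<in>S. norm (x n))
                    else (infsum (\<lambda>n. norm (x n) powr real_of_ereal p) S) powr (1 / real_of_ereal p))"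

definition sturm_v :: "real \<Rightarrow> real \<Rightarrow> int \<Rightarrow> real" where
  "sturm_v \<alpha> \<psi> n = (if 1 - \<alpha> \<le> frac (of_int n * \<alpha> + \<psi>) \<and> frac (of_int n * \<alpha> + \<psi>) < 1 then 1 else 0)"

definition H_op :: "real \<Rightarrow> real \<Rightarrow> real \<Rightarrow> (int \<Rightarrow> complex) \<Rightarrow> int \<Rightarrow> complex" where
  "H_op lam \<alpha> \<psi> x n = x (n + 1) + x (n - 1) + complex_of_real (lam * sturm_v \<alpha> \<psi> n) * x n"

definition H_plus :: "real \<Rightarrow> real \<Rightarrow> real \<Rightarrow> (nat \<Rightarrow> complex) \<Rightarrow> nat \<Rightarrow> complex" where
  "H_plus lam \<alpha> \<psi> x n = x (Suc n) + (if n = 0 then 0 else x (n - 1))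
       + complex_of_real (lam * sturm_v \<alpha> \<psi> (int n)) * x n"

definition H_opnorm :: "ereal \<Rightarrow> real \<Rightarrow> real \<Rightarrow> real \<Rightarrow> real" where
  "H_opnorm p lam \<alpha> \<psi> = Sup {lp_norm p UNIV (H_op lam \<alpha> \<psi> x) | x. lp_mem p UNIV x \<and> lp_norm p UNIV x = 1}"

definition nu_H_plus :: "ereal \<Rightarrow> real \<Rightarrow> real \<Rightarrow> real \<Rightarrow> real" where
  "nu_H_plus p lam \<alpha> \<psi> = Inf {lp_norm p UNIV (H_plus lam \<alpha> \<psi> x) | x. lp_mem p UNIV x \<and> lp_norm p UNIV x = 1}"

text \<open>Lower norm \<nu>([H_{\<lambda>,\<alpha>,\<psi>}]_D) of the finite section C^{D+1} \<rightarrow> C^{D+2}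
  (x supported in {0..D}, image measured on {0..D+1}).\<close>
definition nu_H_section :: "ereal \<Rightarrow> real \<Rightarrow> real \<Rightarrow> real \<Rightarrow> nat \<Rightarrow> real" where
  "nu_H_section p lam \<alpha> \<psi> D = Inf {lp_norm p {0..D+1} (H_plus lam \<alpha> \<psi> x) | x.
        (\<forall>n>D. x n = 0) \<and> lp_norm p {0..D} x = 1}"

end

theory Submission
  imports Defs
begin
lemma split_pow:
  fixes U V W t s q :: real
  assumes "0 \<le> V" "0 \<le> W" "0 \<le> U" "U \<le> V + W" "t > 0" "s > 0" "q \<ge> 1"
  shows "U powr q \<le> ((t+s)/t) powr (q-1) * V powr q + ((t+s)/s) powr (q-1) * W powr q"
proof -
  have c1: "((t+s)/t) powr (q-1) \<ge> 1" using assms by (intro ge_one_powr_ge_zero) auto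
  have c2: "((t+s)/s) powr (q-1) \<ge> 1" using assms by (intro ge_one_powr_ge_zero) auto
  have "U powr q \<le> (V + W) powr q" using assms by (intro powr_mono2) auto
  also have "\<dots> \<le> ((t+s)/t) powr (q-1) * V powr q + ((t+s)/s) powr (q-1) * W powr q"
  proof (cases "V = 0 \<or> W = 0")
    case True
    have P0: "0 \<le> ((t+s)/t) powr (q-1) * V powr q" "0 \<le> ((t+s)/s) powr (q-1) * W powr q" by simp_all
    show ?thesis using True
    proof
      assume V0: "V = 0"
      have "(V + W) powr q \<le> 1 * W powr q" using V0 by simp
      also have "\<dots> \<le> ((t+s)/s) powr (q-1) * W powr q" by (rule mult_right_mono[OF c2]) simp
      finally show ?thesis using P0 by linarith
    next
      assume W0: "W = 0"
      have "(V + W) powr q \<le> 1 * V powr q" using W0 by simp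
      also have "\<dots> \<le> ((t+s)/t) powr (q-1) * V powr q" by (rule mult_right_mono[OF c1]) simp
      finally show ?thesis using P0 by linarith
    qed
  next
    case False
    then have Vp: "V > 0" and Wp: "W > 0" using assms by auto
    define l where "l = s/(t+s)"
    have l0: "0 \<le> l" "l \<le> 1" using assms by (auto simp: l_def)
    have l1: "1 - l = t/(t+s)" using assms by (simp add: l_def field_simps)
    have eq: "V + W = (1 - l) *\<^sub>R (V * ((t+s)/t)) + l *\<^sub>R (W * ((t+s)/s))"
    proof -
      have "t + s > 0" using assms by simp
      then have e1: "(t/(t+s)) * ((t+s)/t) = 1" "(s/(t+s)) * ((t+s)/s) = 1" using assms by simp_all
      have "(t/(t+s)) * (V * ((t+s)/t)) = V * ((t/(t+s)) * ((t+s)/t))" by (simp only: ac_simps)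
      moreover have "(s/(t+s)) * (W * ((t+s)/s)) = W * ((s/(t+s)) * ((t+s)/s))" by (simp only: ac_simps)
      ultimately have "(t/(t+s)) * (V * ((t+s)/t)) = V" "(s/(t+s)) * (W * ((t+s)/s)) = W" using e1 by simp_all
      then show ?thesis unfolding real_scaleR_def l1 unfolding l_def by simp
    qed
    have "(V + W) powr q \<le> (1 - l) * (V * ((t+s)/t)) powr q + l * (W * ((t+s)/s)) powr q"
      unfolding eq
      by (rule convex_onD[OF powr_convex[OF assms(7)]]) (use l0 Vp Wp assms in auto)
    also have "(1 - l) * (V * ((t+s)/t)) powr q = ((t+s)/t) powr (q-1) * V powr q"
    proof -
      have "(1 - l) * (V * ((t+s)/t)) powr q = (t/(t+s)) * ((t+s)/t) powr q * V powr q"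
      proof -
        have "(V * ((t+s)/t)) powr q = V powr q * ((t+s)/t) powr q" using powr_mult[of V "(t+s)/t" q] assms Vp by simp
        then show ?thesis by (simp only: l1 ac_simps)
      qed
      also have "(t/(t+s)) * ((t+s)/t) powr q = ((t+s)/t) powr (q-1)"
        using assms by (simp add: powr_diff field_simps)
      finally show ?thesis by simp
    qed
    also have "l * (W * ((t+s)/s)) powr q = ((t+s)/s) powr (q-1) * W powr q"
    proof -
      have "l * (W * ((t+s)/s)) powr q = (s/(t+s)) * ((t+s)/s) powr q * W powr q"
      proof -
        have "(W * ((t+s)/s)) powr q = W powr q * ((t+s)/s) powr q" using powr_mult[of W "(t+s)/s" q] assms Wp by simp
        then show ?thesis by (simp only: l_def ac_simps)
      qed
      also have "(s/(t+s)) * ((t+s)/s) powr q = ((t+s)/s) powr (q-1)"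
        using assms by (simp add: powr_diff field_simps)
      finally show ?thesis by simp
    qed
    finally show ?thesis .
  qed
  finally show ?thesis .
qed

lemma sturm_shift:
  "sturm_v \<alpha> (frac (of_int (k + int s) * \<alpha>)) (int n) = sturm_v \<alpha> (frac (of_int k * \<alpha>)) (int (n + s))"
proof -
  have "frac (of_int (int n) * \<alpha> + frac (of_int (k + int s) * \<alpha>)) = frac (of_int (int (n+s)) * \<alpha> + frac (of_int k * \<alpha>))"
    using frac_add_simps(2)[of "of_int (int n) * \<alpha>" "of_int (k + int s) * \<alpha>"]
      frac_add_simps(2)[of "of_int (int (n+s)) * \<alpha>" "of_int k * \<alpha>"]
    by (simp add: algebra_simps)
  then show ?thesis unfolding sturm_v_def by simp
qed

lemma H_plus_shift:
  assumes "\<And>n. n < s \<Longrightarrow> y n = 0"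
  shows "H_plus lam \<alpha> (frac (of_int (k + int s) * \<alpha>)) (\<lambda>n. y (n + s)) n
       = H_plus lam \<alpha> (frac (of_int k * \<alpha>)) y (n + s)"
proof (cases "n = 0")
  case True
  then show ?thesis using assms[of "s - 1"] unfolding H_plus_def sturm_shift
    by (cases s) auto
next
  case False
  then have "n - 1 + s = n + s - 1" by simp
  then show ?thesis using False unfolding H_plus_def sturm_shift by simp
qed

lemma p_fin:
  assumes "1 \<le> p" "p \<noteq> \<infinity>"
  shows "p = ereal (real_of_ereal p)" "real_of_ereal p \<ge> 1"
  using assms by (cases p; auto)+

lemma lp_norm_fin:
  assumes "p \<noteq> \<infinity>" "finite S"
  shows "lp_norm p S x = (\<Sum>n\<in>S. norm (x n) powr real_of_ereal p) powr (1 / real_of_ereal p)"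
  using assms by (simp add: lp_norm_def)

lemma lp_norm_inf: "lp_norm \<infinity> S x = (SUP n\<in>S. norm (x n))"
  by (simp add: lp_norm_def)

lemma lp_norm_nonneg:
  assumes "finite S" "S \<noteq> {}"
  shows "0 \<le> lp_norm p S x"
proof (cases "p = \<infinity>")
  case True
  obtain n where "n \<in> S" using assms by auto
  then have "norm (x n) \<le> (SUP n\<in>S. norm (x n))"
    using assms by (intro cSUP_upper) (auto intro: bdd_above_finite)
  moreover have "0 \<le> norm (x n)" by simp
  ultimately have "0 \<le> (SUP n\<in>S. norm (x n))" by linarith
  then show ?thesis using True by (simp add: lp_norm_def)
next
  case False
  then show ?thesis by (simp add: lp_norm_def)
qed

lemma lp_norm_scale:
  assumes "finite S" "S \<noteq> {}" "1 \<le> p" "c \<ge> 0"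
  shows "lp_norm p S (\<lambda>n. complex_of_real c * x n) = c * lp_norm p S x"
proof (cases "p = \<infinity>")
  case True
  have bdd: "bdd_above ((\<lambda>n. norm (x n)) ` S)" "bdd_above ((\<lambda>n. c * norm (x n)) ` S)"
    using assms by (auto intro: bdd_above_finite)
  have "(SUP n\<in>S. c * norm (x n)) = c * (SUP n\<in>S. norm (x n))"
  proof (cases "c = 0")
    case True
    then show ?thesis using assms by simp
  next
    case False
    then have cp: "c > 0" using assms by simp
    show ?thesis
    proof (rule antisym)
      show "(SUP n\<in>S. c * norm (x n)) \<le> c * (SUP n\<in>S. norm (x n))"
        using assms cp bdd by (intro cSUP_least) (auto intro!: mult_left_mono cSUP_upper)
      have "(SUP n\<in>S. norm (x n)) \<le> (SUP n\<in>S. c * norm (x n)) / c"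
        using assms cp bdd by (intro cSUP_least) (auto simp: field_simps intro!: cSUP_upper)
      then show "c * (SUP n\<in>S. norm (x n)) \<le> (SUP n\<in>S. c * norm (x n))"
        using cp by (simp add: field_simps)
    qed
  qed
  then show ?thesis using True assms by (simp add: lp_norm_def norm_mult)
next
  case False
  define q where "q = real_of_ereal p"
  have q1: "q \<ge> 1" using p_fin[OF assms(3) False] q_def by simp
  have "(\<Sum>n\<in>S. norm (complex_of_real c * x n) powr q) = c powr q * (\<Sum>n\<in>S. norm (x n) powr q)"
  proof -
    have "norm (complex_of_real c * x n) powr q = c powr q * norm (x n) powr q" for n
      using assms powr_mult[of c "norm (x n)" q] by (simp add: norm_mult)
    then show ?thesis by (simp add: sum_distrib_left)
  qed
  then have "(\<Sum>n\<in>S. norm (complex_of_real c * x n) powr q) powr (1/q) = (c powr q) powr (1/q) * (\<Sum>n\<in>S. norm (x n) powr q) powr (1/q)"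
    using powr_mult[of "c powr q" "\<Sum>n\<in>S. norm (x n) powr q" "1/q"] by (simp add: sum_nonneg)
  also have "(c powr q) powr (1/q) = c" using q1 assms by (simp add: powr_powr)
  finally show ?thesis using False assms unfolding lp_norm_fin[OF False assms(1)] q_def by simp
qed

lemma supp_sum_eq:
  fixes g :: "nat \<Rightarrow> real"
  assumes "finite A" "finite B" "\<And>n. n \<notin> A \<inter> B \<Longrightarrow> g n = 0"
  shows "sum g A = sum g B"
proof -
  have "sum g (A \<inter> B) = sum g A" using assms by (intro sum.mono_neutral_left) auto
  moreover have "sum g (A \<inter> B) = sum g B" using assms by (intro sum.mono_neutral_left) auto
  ultimately show ?thesis by simp
qed

lemma section_set_nonempty:
  fixes D :: nat
  shows "(\<lambda>n. if n = 0 then 1 else 0 :: complex) \<in> {x. (\<forall>n>D. x n = 0) \<and> lp_norm p {0..D} x = 1}"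
proof -
  have "lp_norm p {0..D} (\<lambda>n. if n = 0 then 1 else 0 :: complex) = 1"
  proof (cases "p = \<infinity>")
    case True
    have "(SUP n\<in>{0..D}. norm (if n = 0 then 1 else 0 :: complex)) = 1"
    proof (rule antisym)
      show "(SUP n\<in>{0..D}. norm (if n = 0 then 1 else 0 :: complex)) \<le> 1"
        by (rule cSUP_least) auto
      have "norm (if (0::nat) = 0 then 1 else 0 :: complex) \<le> (SUP n\<in>{0..D}. norm (if n = 0 then 1 else 0 :: complex))"
        by (rule cSUP_upper) (auto intro: bdd_above_finite)
      then show "1 \<le> (SUP n\<in>{0..D}. norm (if n = 0 then 1 else 0 :: complex))" by simp
    qed
    then show ?thesis using True by (simp add: lp_norm_def)
  next
    case False
    have eqf: "(\<lambda>n. norm (if n = 0 then 1 else 0 :: complex) powr real_of_ereal p) = (\<lambda>n. if n = 0 then 1 else 0)"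
      by auto
    have "(\<Sum>n\<in>{0..D}. norm (if n = 0 then 1 else 0 :: complex) powr real_of_ereal p) = 1"
      by (subst eqf) simp
    then show ?thesis using False by (simp add: lp_norm_def)
  qed
  then show ?thesis unfolding mem_Collect_eq by simp
qed

lemma section_bdd: "bdd_below {lp_norm p {0..D+1} (H_plus lam \<alpha> \<psi> x) | x. (\<forall>n>D. x n = 0) \<and> lp_norm p {0..D} x = 1}"
proof (rule bdd_belowI[of _ 0])
  fix y assume "y \<in> {lp_norm p {0..D+1} (H_plus lam \<alpha> \<psi> x) | x. (\<forall>n>D. x n = 0) \<and> lp_norm p {0..D} x = 1}"
  then obtain x where "y = lp_norm p {0..D+1} (H_plus lam \<alpha> \<psi> x)" by (simp only: mem_Collect_eq) blast
  then show "0 \<le> y" using lp_norm_nonneg[of "{0..D+1}" p "H_plus lam \<alpha> \<psi> x"] by simp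
qed

lemma section_mem:
  assumes "\<forall>n>D. x n = 0" "lp_norm p {0..D} x = 1"
  shows "lp_norm p {0..D+1} (H_plus lam \<alpha> \<psi> x) \<in> {lp_norm p {0..D+1} (H_plus lam \<alpha> \<psi> x) | x. (\<forall>n>D. x n = 0) \<and> lp_norm p {0..D} x = 1}"
  using assms by (intro CollectI exI[of _ x]) simp

lemma nu_section_le:
  assumes "\<forall>n>D. x n = 0" "lp_norm p {0..D} x = 1"
  shows "nu_H_section p lam \<alpha> \<psi> D \<le> lp_norm p {0..D+1} (H_plus lam \<alpha> \<psi> x)"
  unfolding nu_H_section_def by (rule cInf_lower[OF section_mem[OF assms] section_bdd])

lemma nu_section_nonneg: "0 \<le> nu_H_section p lam \<alpha> \<psi> D"
proof -
  note ws = section_set_nonempty[of D p, unfolded mem_Collect_eq]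
  define w where "w = (\<lambda>n::nat. if n = 0 then 1 else 0 :: complex)"
  have w: "\<forall>n>D. w n = 0" "lp_norm p {0..D} w = 1" unfolding w_def by (rule conjunct1[OF ws], rule conjunct2[OF ws])
  show "0 \<le> nu_H_section p lam \<alpha> \<psi> D"
    unfolding nu_H_section_def
  proof (rule cInf_greatest)
    show "{lp_norm p {0..D+1} (H_plus lam \<alpha> \<psi> x) | x. (\<forall>n>D. x n = 0) \<and> lp_norm p {0..D} x = 1} \<noteq> {}"
      using section_mem[OF w, of lam \<alpha> \<psi>] by (metis empty_iff)
    fix y assume "y \<in> {lp_norm p {0..D+1} (H_plus lam \<alpha> \<psi> x) | x. (\<forall>n>D. x n = 0) \<and> lp_norm p {0..D} x = 1}"
    then obtain x where "y = lp_norm p {0..D+1} (H_plus lam \<alpha> \<psi> x)" by (simp only: mem_Collect_eq) blast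
    then show "0 \<le> y" using lp_norm_nonneg[of "{0..D+1}" p "H_plus lam \<alpha> \<psi> x"] by simp
  qed
qed

lemma window:
  assumes p1: "1 \<le> p" and supp: "\<And>n. n < s \<or> s + D < n \<Longrightarrow> y n = 0"
    and Wpos: "lp_norm p {0..D} (\<lambda>n. y (n+s)) > 0"
  shows "nu_H_section p lam \<alpha> (frac (of_int (k + int s) * \<alpha>)) D
     \<le> lp_norm p {0..D+1} (\<lambda>n. H_plus lam \<alpha> (frac (of_int k * \<alpha>)) y (n+s)) / lp_norm p {0..D} (\<lambda>n. y(n+s))"
proof -
  define W where "W = lp_norm p {0..D} (\<lambda>n. y (n+s))"
  define z where "z = (\<lambda>n. complex_of_real (1/W) * y (n+s))"
  have W0: "W > 0" using Wpos W_def by simp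
  have z1: "\<forall>n>D. z n = 0" using supp unfolding z_def by auto
  have z2: "lp_norm p {0..D} z = 1" unfolding z_def
    using lp_norm_scale[of "{0..D}" p "1/W" "\<lambda>n. y (n+s)"] p1 W0 W_def by simp
  have Hz: "H_plus lam \<alpha> (frac (of_int (k + int s) * \<alpha>)) z
      = (\<lambda>n. complex_of_real (1/W) * H_plus lam \<alpha> (frac (of_int k * \<alpha>)) y (n+s))"
  proof
    fix n
    have "H_plus lam \<alpha> (frac (of_int (k + int s) * \<alpha>)) z n
       = complex_of_real (1/W) * H_plus lam \<alpha> (frac (of_int (k + int s) * \<alpha>)) (\<lambda>n. y (n+s)) n"
      unfolding z_def H_plus_def by (simp add: algebra_simps)
    also have "\<dots> = complex_of_real (1/W) * H_plus lam \<alpha> (frac (of_int k * \<alpha>)) y (n+s)"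
      using H_plus_shift[of s y lam \<alpha> k n] supp by simp
    finally show "H_plus lam \<alpha> (frac (of_int (k + int s) * \<alpha>)) z n = complex_of_real (1/W) * H_plus lam \<alpha> (frac (of_int k * \<alpha>)) y (n+s)" .
  qed
  have "nu_H_section p lam \<alpha> (frac (of_int (k + int s) * \<alpha>)) D \<le> lp_norm p {0..D+1} (H_plus lam \<alpha> (frac (of_int (k + int s) * \<alpha>)) z)"
    by (rule nu_section_le[OF z1 z2])
  also have "\<dots> = (1/W) * lp_norm p {0..D+1} (\<lambda>n. H_plus lam \<alpha> (frac (of_int k * \<alpha>)) y (n+s))"
    unfolding Hz using p1 W0 by (intro lp_norm_scale) auto
  finally show ?thesis unfolding W_def by simp
qed

lemma sturm_bounds: "0 \<le> sturm_v \<alpha> \<psi> n" "sturm_v \<alpha> \<psi> n \<le> 1"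
  by (simp_all add: sturm_v_def)

lemma sturm_zero: "\<alpha> < 1 \<Longrightarrow> sturm_v \<alpha> 0 0 = 0"
  by (simp add: sturm_v_def)

lemma pow3:
  fixes U A B C q :: real
  assumes "0 \<le> A" "0 \<le> B" "0 \<le> C" "0 \<le> U" "U \<le> A + B + C" "q \<ge> 1"
  shows "U powr q \<le> (2 powr (q-1) * (2 powr (q-1) + 1)) * (A powr q + B powr q + C powr q)"
proof -
  have e: "((1+1)/1::real) = 2" by simp
  have "U powr q \<le> 2 powr (q-1) * (A+B) powr q + 2 powr (q-1) * C powr q"
    using split_pow[of "A+B" C U 1 1 q] assms by (simp add: e)
  also have "(A+B) powr q \<le> 2 powr (q-1) * A powr q + 2 powr (q-1) * B powr q"
    using split_pow[of A B "A+B" 1 1 q] assms by (simp add: e)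
  finally have "U powr q \<le> 2 powr (q-1) * (2 powr (q-1) * A powr q + 2 powr (q-1) * B powr q) + 2 powr (q-1) * C powr q"
    by (simp add: mult_left_mono)
  also have "\<dots> \<le> (2 powr (q-1) * (2 powr (q-1) + 1)) * (A powr q + B powr q + C powr q)"
  proof -
    have "0 \<le> 2 powr (q-1) * (2 powr (q-1) * A powr q + 2 powr (q-1) * B powr q)" by simp
    have "2 powr (q-1) * C powr q \<le> 2 powr (q-1) * (2 powr (q-1) + 1) * C powr q"
      by (intro mult_right_mono) (simp_all add: algebra_simps)
    moreover have "2 powr (q-1) * (2 powr (q-1) * A powr q + 2 powr (q-1) * B powr q)
       \<le> 2 powr (q-1) * (2 powr (q-1) + 1) * (A powr q + B powr q)"
    proof -
      have "2 powr (q-1) * A powr q + 2 powr (q-1) * B powr q \<le> (2 powr (q-1) + 1) * (A powr q + B powr q)"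
        using powr_ge_zero[of A q] powr_ge_zero[of B q] by (simp add: algebra_simps)
      then have "2 powr (q-1) * (2 powr (q-1) * A powr q + 2 powr (q-1) * B powr q) \<le> 2 powr (q-1) * ((2 powr (q-1) + 1) * (A powr q + B powr q))"
        by (rule mult_left_mono) simp
      then show ?thesis by (simp only: mult.assoc)
    qed
    ultimately show ?thesis by (simp add: algebra_simps)
  qed
  finally show ?thesis .
qed

lemma summable_shift_nat:
  fixes a :: "nat \<Rightarrow> real"
  assumes "a summable_on UNIV"
  shows "(\<lambda>n. a (Suc n)) summable_on UNIV"
    "(\<lambda>n. if n = 0 then 0 else a (n - 1)) summable_on UNIV"
proof -
  have "a summable_on (range Suc)" using assms by (rule summable_on_subset_banach) simp
  then show "(\<lambda>n. a (Suc n)) summable_on UNIV"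
    using summable_on_reindex[of Suc UNIV a] by (simp add: o_def)
  have "(\<lambda>n. if n = 0 then 0 else a (n - 1)) summable_on UNIV \<longleftrightarrow> (\<lambda>n. if n = 0 then 0 else a (n - 1)) summable_on (range Suc)"
    by (rule summable_on_cong_neutral) (auto simp: image_iff, presburger)
  also have "\<dots> \<longleftrightarrow> ((\<lambda>n. if n = 0 then 0 else a (n - 1)) \<circ> Suc) summable_on UNIV"
    by (rule summable_on_reindex) simp
  also have "((\<lambda>n. if n = 0 then 0 else a (n - 1)) \<circ> Suc) = a" by (simp add: o_def)
  finally show "(\<lambda>n. if n = 0 then 0 else a (n - 1)) summable_on UNIV" using assms by simp
qed

lemma Hplus_summable:
  assumes q: "q \<ge> 1" and sx: "(\<lambda>n. norm (x n) powr q) summable_on UNIV"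
  shows "(\<lambda>n. norm (H_plus lam \<alpha> \<psi> x n) powr q) summable_on UNIV"
proof -
  define a where "a = (\<lambda>n. norm (x n) powr q)"
  define K where "K = 2 powr (q-1) * (2 powr (q-1) + 1)"
  have sa: "a summable_on UNIV" using sx a_def by simp
  have bound: "norm (H_plus lam \<alpha> \<psi> x n) powr q \<le> K * (a (Suc n) + (if n = 0 then 0 else a (n - 1)) + \<bar>lam\<bar> powr q * a n)" for n
  proof -
    have "norm (H_plus lam \<alpha> \<psi> x n) \<le> norm (x (Suc n)) + norm (if n = 0 then 0 else x (n - 1)) + \<bar>lam\<bar> * norm (x n)"
    proof -
      have "norm (complex_of_real (lam * sturm_v \<alpha> \<psi> (int n)) * x n) \<le> \<bar>lam\<bar> * norm (x n)"
        using sturm_bounds[of \<alpha> \<psi> "int n"] by (simp add: norm_mult abs_mult mult_right_mono mult_left_le)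
      then show ?thesis unfolding H_plus_def
        by (smt (verit) norm_triangle_ineq)
    qed
    then have "norm (H_plus lam \<alpha> \<psi> x n) powr q \<le> K * (norm (x (Suc n)) powr q + norm (if n = 0 then 0 else x (n - 1)) powr q + (\<bar>lam\<bar> * norm (x n)) powr q)"
      unfolding K_def using q by (intro pow3) auto
    moreover have "(\<bar>lam\<bar> * norm (x n)) powr q = \<bar>lam\<bar> powr q * a n" unfolding a_def by (simp add: powr_mult)
    moreover have "norm (if n = 0 then 0 else x (n - 1)) powr q = (if n = 0 then 0 else a (n - 1))"
      unfolding a_def using q by simp
    ultimately show ?thesis unfolding a_def by simp
  qed
  have "(\<lambda>n. K * (a (Suc n) + (if n = 0 then 0 else a (n - 1)) + \<bar>lam\<bar> powr q * a n)) summable_on UNIV"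
    using summable_shift_nat[OF sa] sa
    by (intro summable_on_cmult_right summable_on_add) auto
  then show ?thesis
    by (rule summable_on_comparison_test) (use bound in auto)
qed

lemma shift_int:
  fixes a :: "int \<Rightarrow> real" and c :: int
  assumes "a summable_on UNIV"
  shows "(\<lambda>n. a (n + c)) summable_on UNIV" "infsum (\<lambda>n. a (n + c)) UNIV = infsum a UNIV"
proof -
  have b: "bij_betw (\<lambda>n. n + c) UNIV UNIV"
    by (rule bij_betwI[of _ _ _ "\<lambda>n. n - c"]) auto
  show "(\<lambda>n. a (n + c)) summable_on UNIV" using summable_on_reindex_bij_betw[OF b, of a] assms by simp
  show "infsum (\<lambda>n. a (n + c)) UNIV = infsum a UNIV" using infsum_reindex_bij_betw[OF b, of a] by simp
qed

lemma lp_fin_pow: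
  fixes X q :: real
  assumes "q \<ge> 1" "X \<ge> 0"
  shows "X powr (1/q) = 1 \<longleftrightarrow> X = 1"
proof
  assume "X powr (1/q) = 1"
  then have "(X powr (1/q)) powr q = 1" by simp
  moreover have "(X powr (1/q)) powr q = X powr (1/q * q)" by (rule powr_powr)
  moreover have "1/q * q = 1" using assms by simp
  ultimately show "X = 1" using assms by simp
qed simp

lemma Hop_bound_fin:
  assumes q: "q \<ge> 1" and sx: "(\<lambda>n. norm (x n) powr q) summable_on UNIV"
    and s1: "infsum (\<lambda>n. norm (x n) powr q) UNIV = 1"
  shows "infsum (\<lambda>n. norm (H_op lam \<alpha> \<psi> x n) powr q) UNIV \<le> (2 powr (q-1) * (2 powr (q-1) + 1)) * (2 + \<bar>lam\<bar> powr q)"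
proof -
  define a where "a = (\<lambda>n. norm (x n) powr q)"
  define K where "K = 2 powr (q-1) * (2 powr (q-1) + 1)"
  have sa: "a summable_on UNIV" using sx a_def by simp
  have bound: "norm (H_op lam \<alpha> \<psi> x n) powr q \<le> K * (a (n + 1) + a (n - 1) + \<bar>lam\<bar> powr q * a n)" for n
  proof -
    have "norm (H_op lam \<alpha> \<psi> x n) \<le> norm (x (n+1)) + norm (x (n - 1)) + \<bar>lam\<bar> * norm (x n)"
    proof -
      have "norm (complex_of_real (lam * sturm_v \<alpha> \<psi> n) * x n) \<le> \<bar>lam\<bar> * norm (x n)"
        using sturm_bounds[of \<alpha> \<psi> n] by (simp add: norm_mult abs_mult mult_right_mono mult_left_le)
      then show ?thesis unfolding H_op_def
        by (smt (verit) norm_triangle_ineq)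
    qed
    then have "norm (H_op lam \<alpha> \<psi> x n) powr q \<le> K * (norm (x (n+1)) powr q + norm (x (n-1)) powr q + (\<bar>lam\<bar> * norm (x n)) powr q)"
      unfolding K_def using q by (intro pow3) auto
    moreover have "(\<bar>lam\<bar> * norm (x n)) powr q = \<bar>lam\<bar> powr q * a n" unfolding a_def by (simp add: powr_mult)
    ultimately show ?thesis unfolding a_def by simp
  qed
  have s2: "(\<lambda>n. a (n + 1)) summable_on UNIV" "(\<lambda>n. a (n - 1)) summable_on UNIV"
    using shift_int[OF sa, of 1] shift_int[OF sa, of "-1"] by simp_all
  have i2: "infsum (\<lambda>n. a (n + 1)) UNIV = 1" "infsum (\<lambda>n. a (n - 1)) UNIV = 1"
    using shift_int[OF sa, of 1] shift_int[OF sa, of "-1"] s1 a_def by simp_all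
  have sS: "(\<lambda>n. K * (a (n + 1) + a (n - 1) + \<bar>lam\<bar> powr q * a n)) summable_on UNIV"
    using s2 sa by (intro summable_on_cmult_right summable_on_add) auto
  have "infsum (\<lambda>n. norm (H_op lam \<alpha> \<psi> x n) powr q) UNIV \<le> infsum (\<lambda>n. K * (a (n + 1) + a (n - 1) + \<bar>lam\<bar> powr q * a n)) UNIV"
    by (rule infsum_mono[OF summable_on_comparison_test[OF sS] sS]) (use bound in auto)
  also have "\<dots> = K * (infsum (\<lambda>n. a (n + 1)) UNIV + infsum (\<lambda>n. a (n - 1)) UNIV + \<bar>lam\<bar> powr q * infsum a UNIV)"
    using s2 sa by (simp add: infsum_cmult_right summable_on_add summable_on_cmult_right infsum_add)
  also have "\<dots> = K * (2 + \<bar>lam\<bar> powr q)" using i2 s1 a_def by simp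
  finally show ?thesis unfolding K_def .
qed

lemma delta_int:
  fixes f :: "int \<Rightarrow> real"
  assumes "finite F" "\<And>n. n \<notin> F \<Longrightarrow> f n = 0"
  shows "f summable_on UNIV" "infsum f UNIV = sum f F"
proof -
  have "f summable_on UNIV \<longleftrightarrow> f summable_on F"
    by (rule summable_on_cong_neutral) (use assms in auto)
  then show "f summable_on UNIV" using assms by simp
  have "infsum f UNIV = infsum f F"
    by (rule infsum_cong_neutral) (use assms in auto)
  then show "infsum f UNIV = sum f F" using assms by simp
qed

lemma opnorm_fin:
  assumes p1: "1 \<le> p" and pf: "p \<noteq> \<infinity>" and al: "\<alpha> < 1"
  shows "H_opnorm p lam \<alpha> 0 \<ge> 1"
proof -
  define q where "q = real_of_ereal p"
  have q1: "q \<ge> 1" using p_fin[OF p1 pf] q_def by simp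
  define X where "X = {lp_norm p UNIV (H_op lam \<alpha> 0 x) | x. lp_mem p UNIV x \<and> lp_norm p UNIV x = 1}"
  define K where "K = 2 powr (q-1) * (2 powr (q-1) + 1)"
  have bdd: "bdd_above X"
  proof (rule bdd_aboveI[of _ "(K * (2 + \<bar>lam\<bar> powr q)) powr (1/q)"])
    fix y assume "y \<in> X"
    then obtain x where y: "y = lp_norm p UNIV (H_op lam \<alpha> 0 x)" and x: "lp_mem p UNIV x" "lp_norm p UNIV x = 1"
      unfolding X_def by blast
    have sx: "(\<lambda>n. norm (x n) powr q) summable_on UNIV" using x pf unfolding lp_mem_def q_def by simp
    have "infsum (\<lambda>n. norm (x n) powr q) UNIV powr (1/q) = 1" using x pf unfolding lp_norm_def q_def by simp
    then have s1: "infsum (\<lambda>n. norm (x n) powr q) UNIV = 1"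
      using lp_fin_pow[OF q1] infsum_nonneg[of UNIV "\<lambda>n. norm (x n) powr q"] by simp
    have "y = infsum (\<lambda>n. norm (H_op lam \<alpha> 0 x n) powr q) UNIV powr (1/q)"
      using y pf unfolding lp_norm_def q_def by simp
    also have "\<dots> \<le> (K * (2 + \<bar>lam\<bar> powr q)) powr (1/q)"
      unfolding K_def using Hop_bound_fin[OF q1 sx s1] q1
      by (intro powr_mono2) (auto intro: infsum_nonneg)
    finally show "y \<le> (K * (2 + \<bar>lam\<bar> powr q)) powr (1/q)" .
  qed
  define d where "d = (\<lambda>n::int. if n = 0 then 1 else 0 :: complex)"
  have dn: "(\<lambda>n. norm (d n) powr q) = (\<lambda>n. if n = 0 then 1 else 0)" unfolding d_def by auto
  have dm: "lp_mem p UNIV d" unfolding lp_mem_def using pf dn delta_int(1)[of "{0}"] q_def by simp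
  have dl: "lp_norm p UNIV d = 1" unfolding lp_norm_def using pf dn delta_int(2)[of "{0}" "\<lambda>n. if n = 0 then 1 else 0"] q_def by simp
  have Hd: "H_op lam \<alpha> 0 d = (\<lambda>n. if n = -1 \<or> n = 1 then 1 else 0)"
    using sturm_zero[OF al] unfolding H_op_def d_def by auto
  have Hdn: "(\<lambda>n. norm (H_op lam \<alpha> 0 d n) powr q) = (\<lambda>n. if n \<in> {-1, 1} then 1 else 0)"
    unfolding Hd by auto
  have "lp_norm p UNIV (H_op lam \<alpha> 0 d) = 2 powr (1/q)"
    unfolding lp_norm_def using pf q_def Hdn delta_int(2)[of "{-1,1}" "\<lambda>n. if n \<in> {-1, 1} then 1 else 0"] by simp
  then have "2 powr (1/q) \<in> X" unfolding X_def using dm dl by (intro CollectI exI[of _ d]) simp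
  then have "2 powr (1/q) \<le> H_opnorm p lam \<alpha> 0" unfolding H_opnorm_def X_def[symmetric]
    by (rule cSup_upper[OF _ bdd])
  moreover have "1 \<le> 2 powr (1/q)" using q1 by (intro ge_one_powr_ge_zero) auto
  ultimately show ?thesis by simp
qed

lemma Hop_inf_bound:
  assumes xb: "\<And>n. norm (x n) \<le> 1"
  shows "norm (H_op lam \<alpha> \<psi> x n) \<le> 2 + \<bar>lam\<bar>"
proof -
  have "norm (complex_of_real (lam * sturm_v \<alpha> \<psi> n) * x n) = \<bar>lam\<bar> * \<bar>sturm_v \<alpha> \<psi> n\<bar> * norm (x n)"
    by (simp add: norm_mult abs_mult)
  also have "\<dots> \<le> \<bar>lam\<bar> * 1 * 1"
    using sturm_bounds[of \<alpha> \<psi> n] xb[of n] by (intro mult_mono) auto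
  finally have "norm (complex_of_real (lam * sturm_v \<alpha> \<psi> n) * x n) \<le> \<bar>lam\<bar>" by simp
  moreover have "norm (H_op lam \<alpha> \<psi> x n) \<le> norm (x (n+1)) + norm (x (n-1)) + norm (complex_of_real (lam * sturm_v \<alpha> \<psi> n) * x n)"
    unfolding H_op_def by (meson norm_triangle_ineq order_trans add_mono order_refl)
  ultimately show ?thesis using xb[of "n+1"] xb[of "n-1"] by linarith
qed

lemma opnorm_inf:
  assumes al: "\<alpha> < 1"
  shows "H_opnorm \<infinity> lam \<alpha> 0 \<ge> 2"
proof -
  define X where "X = {lp_norm \<infinity> UNIV (H_op lam \<alpha> 0 x) | x. lp_mem \<infinity> UNIV x \<and> lp_norm \<infinity> UNIV x = 1}"
  have bdd: "bdd_above X"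
  proof (rule bdd_aboveI[of _ "2 + \<bar>lam\<bar>"])
    fix y assume "y \<in> X"
    then obtain x where y: "y = lp_norm \<infinity> UNIV (H_op lam \<alpha> 0 x)" and x: "lp_mem \<infinity> UNIV x" "lp_norm \<infinity> UNIV x = 1"
      unfolding X_def by blast
    have xb: "norm (x n) \<le> 1" for n
      using x cSUP_upper[of n UNIV "\<lambda>n. norm (x n)"] unfolding lp_mem_def lp_norm_def by simp
    show "y \<le> 2 + \<bar>lam\<bar>" unfolding y lp_norm_def using Hop_inf_bound[OF xb] by (simp add: cSUP_least)
  qed
  define d where "d = (\<lambda>n::int. 1 :: complex)"
  have db: "norm (d n) \<le> 1" for n unfolding d_def by simp
  have dm: "lp_mem \<infinity> UNIV d" unfolding lp_mem_def d_def by simp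
  have dl: "lp_norm \<infinity> UNIV d = 1" unfolding lp_norm_def d_def by simp
  have "norm (H_op lam \<alpha> 0 d 0) = 2" using sturm_zero[OF al] unfolding H_op_def d_def by simp
  moreover have "norm (H_op lam \<alpha> 0 d 0) \<le> lp_norm \<infinity> UNIV (H_op lam \<alpha> 0 d)"
  proof -
    have "bdd_above (range (\<lambda>n. norm (H_op lam \<alpha> 0 d n)))"
      using Hop_inf_bound[OF db] by (intro bdd_aboveI[of _ "2 + \<bar>lam\<bar>"]) auto
    then show ?thesis unfolding lp_norm_def using cSUP_upper[of 0 UNIV "\<lambda>n. norm (H_op lam \<alpha> 0 d n)"] by simp
  qed
  moreover have "lp_norm \<infinity> UNIV (H_op lam \<alpha> 0 d) \<le> H_opnorm \<infinity> lam \<alpha> 0"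
    unfolding H_opnorm_def X_def[symmetric]
    by (rule cSup_upper[OF _ bdd]) (unfold X_def, use dm dl in \<open>intro CollectI exI[of _ d], simp\<close>)
  ultimately show ?thesis by simp
qed

definition win :: "nat \<Rightarrow> nat \<Rightarrow> (nat \<Rightarrow> complex) \<Rightarrow> nat \<Rightarrow> complex" where
  "win D m x n = (if m - D \<le> n \<and> n \<le> m then x n else 0)"

lemma sum_le_supp:
  fixes h :: "nat \<Rightarrow> real"
  assumes "finite A" "finite B" "\<And>n. n \<in> A - B \<Longrightarrow> h n = 0" "\<And>n. 0 \<le> h n"
  shows "sum h A \<le> sum h B"
proof -
  have "sum h A = sum h (A \<inter> B)" using assms by (intro sum.mono_neutral_right) auto
  also have "\<dots> \<le> sum h B" using assms by (intro sum_mono2) auto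
  finally show ?thesis .
qed

lemma win_claim:
  assumes p1: "1 \<le> p" and pf: "p \<noteq> \<infinity>" and q: "q = real_of_ereal p"
    and R: "Suc m \<le> R" and H: "\<And>j. B \<le> nu_H_section p lam \<alpha> (frac (of_int j * \<alpha>)) D" and B0: "0 \<le> B"
  shows "B powr q * (\<Sum>n\<le>R. norm (win D m x n) powr q)
      \<le> (\<Sum>n\<le>R. norm (H_plus lam \<alpha> (frac (of_int k * \<alpha>)) (win D m x) n) powr q)"
proof -
  define y where "y = win D m x"
  define T where "T = H_plus lam \<alpha> (frac (of_int k * \<alpha>))"
  define A where "A = (\<Sum>n\<le>R. norm (y n) powr q)"
  define G where "G = (\<Sum>n\<le>R. norm (T y n) powr q)"
  have q1: "q \<ge> 1" using p_fin[OF p1 pf] q by simp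
  have A0: "A \<ge> 0" "G \<ge> 0" unfolding A_def G_def by (auto intro: sum_nonneg)
  show ?thesis
  proof (cases "A = 0")
    case True
    then show ?thesis using A0 unfolding A_def G_def y_def T_def by simp
  next
    case False
    then have Ap: "A > 0" using A0 by simp
    define s where "s = m - D"
    have supp: "y n = 0" if "n < s \<or> s + D < n" for n
      using that unfolding y_def win_def s_def by auto
    have "(\<Sum>n\<in>{0..D}. norm (y (n + s)) powr q) = (\<Sum>n\<in>{0+s..D+s}. norm (y n) powr q)"
      by (rule sum.shift_bounds_cl_nat_ivl[symmetric])
    also have "\<dots> = A" unfolding A_def
      by (rule supp_sum_eq) (auto simp: y_def win_def s_def, use R in linarith)
    finally have Aeq: "(\<Sum>n\<in>{0..D}. norm (y (n + s)) powr q) = A" .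
    have Wn: "lp_norm p {0..D} (\<lambda>n. y (n + s)) = A powr (1/q)"
      using lp_norm_fin[OF pf, of "{0..D}"] Aeq q by simp
    have Wp: "lp_norm p {0..D} (\<lambda>n. y (n + s)) > 0" using Wn Ap by simp
    have "(\<Sum>n\<in>{0..D+1}. norm (T y (n + s)) powr q) = (\<Sum>n\<in>{0+s..D+1+s}. norm (T y n) powr q)"
      by (rule sum.shift_bounds_cl_nat_ivl[symmetric])
    also have "\<dots> \<le> G" unfolding G_def
    proof (rule sum_le_supp)
      fix n assume "n \<in> {0 + s..D + 1 + s} - {..R}"
      then have "n > Suc m" using R by auto
      then show "norm (T y n) powr q = 0" unfolding T_def H_plus_def y_def win_def by auto
    qed auto
    finally have Gle: "(\<Sum>n\<in>{0..D+1}. norm (T y (n + s)) powr q) \<le> G" .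
    have Ln: "lp_norm p {0..D+1} (\<lambda>n. T y (n + s)) \<le> G powr (1/q)"
      using lp_norm_fin[OF pf, of "{0..D+1}"] Gle q q1
      by (simp add: powr_mono2 sum_nonneg)
    have "B \<le> nu_H_section p lam \<alpha> (frac (of_int (k + int s) * \<alpha>)) D" by (rule H)
    also have "\<dots> \<le> lp_norm p {0..D+1} (\<lambda>n. T y (n + s)) / lp_norm p {0..D} (\<lambda>n. y (n + s))"
      unfolding T_def by (rule window[OF p1 supp Wp])
    also have "\<dots> \<le> G powr (1/q) / A powr (1/q)" using Ln Wn Ap by (simp add: divide_right_mono)
    finally have "B * A powr (1/q) \<le> G powr (1/q)" using Ap by (simp add: field_simps)
    then have "(B * A powr (1/q)) powr q \<le> (G powr (1/q)) powr q"
      using B0 q1 by (intro powr_mono2) auto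
    moreover have "(B * A powr (1/q)) powr q = B powr q * A"
      using B0 Ap q1 by (simp add: powr_mult powr_powr)
    moreover have "(G powr (1/q)) powr q = G"
      using A0 q1 by (simp add: powr_powr)
    ultimately show ?thesis unfolding A_def G_def y_def T_def by simp
  qed
qed

definition ind :: "bool \<Rightarrow> complex" where "ind b = (if b then 1 else 0)"

lemma win_decomp:
  fixes D m :: nat
  defines "P \<equiv> \<lambda>j. m - D \<le> j \<and> j \<le> m"
  shows "H_plus lam \<alpha> \<psi> (win D m x) n = (if P n then H_plus lam \<alpha> \<psi> x n else 0)
     + ((ind (P (Suc n)) - ind (P n)) * x (Suc n)
        + (if n = 0 then 0 else (ind (P (n - 1)) - ind (P n)) * x (n - 1)))"
  unfolding H_plus_def win_def P_def ind_def by (auto simp: algebra_simps)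

lemma ind_diff_norm: "norm (ind a - ind b) = (if a = b then 0 else 1)"
  unfolding ind_def by auto

lemma pw_bound:
  fixes D m n :: nat and q t s :: real and x :: "nat \<Rightarrow> complex"
  assumes q1: "q \<ge> 1" and t: "t > 0" and s: "s > 0"
  defines "P \<equiv> \<lambda>j. m - D \<le> j \<and> j \<le> m"
  defines "a \<equiv> \<lambda>j. norm (x j) powr q"
  shows "norm (H_plus lam \<alpha> \<psi> (win D m x) n) powr q
    \<le> ((t+s)/t) powr (q-1) * (if P n then norm (H_plus lam \<alpha> \<psi> x n) powr q else 0)
     + ((t+s)/s) powr (q-1) * 2 powr (q-1) *
       (((if m = n then 1 else 0) + (if m = n + D + 1 then 1 else 0)) * a (Suc n)
        + ((if m = n - 1 then 1 else 0) + (if m = n + D then 1 else 0)) * (if n = 0 then 0 else a (n - 1)))"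
proof -
  define v where "v = (if P n then H_plus lam \<alpha> \<psi> x n else 0)"
  define d1 where "d1 = (ind (P (Suc n)) - ind (P n)) * x (Suc n)"
  define d2 where "d2 = (if n = 0 then 0 else (ind (P (n - 1)) - ind (P n)) * x (n - 1))"
  have eq: "H_plus lam \<alpha> \<psi> (win D m x) n = v + (d1 + d2)"
    unfolding v_def d1_def d2_def P_def by (rule win_decomp)
  have e2: "((1+1)/1::real) = 2" by simp
  have "norm (H_plus lam \<alpha> \<psi> (win D m x) n) powr q \<le> ((t+s)/t) powr (q-1) * norm v powr q + ((t+s)/s) powr (q-1) * norm (d1 + d2) powr q"
    unfolding eq using q1 t s by (intro split_pow) (auto intro: norm_triangle_ineq)
  moreover have "norm v powr q = (if P n then norm (H_plus lam \<alpha> \<psi> x n) powr q else 0)"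
    unfolding v_def by simp
  moreover have "norm (d1 + d2) powr q \<le> 2 powr (q-1) * norm d1 powr q + 2 powr (q-1) * norm d2 powr q"
    using split_pow[of "norm d1" "norm d2" "norm (d1 + d2)" 1 1 q] q1 by (simp add: e2 norm_triangle_ineq)
  moreover have Y1: "norm d1 powr q \<le> ((if m = n then 1 else 0) + (if m = n + D + 1 then 1 else 0)) * a (Suc n)"
  proof (cases "P (Suc n) = P n")
    case True
    then show ?thesis unfolding d1_def a_def by simp
  next
    case False
    then have "m = n \<or> m = n + D + 1" unfolding P_def by linarith
    then have "1 \<le> ((if m = n then 1 else 0) + (if m = n + D + 1 then 1 else 0) :: real)" by auto
    moreover have "norm d1 powr q = a (Suc n)" using False unfolding d1_def a_def by (simp add: norm_mult ind_diff_norm)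
    moreover have "0 \<le> a (Suc n)" unfolding a_def by simp
    ultimately show ?thesis using mult_right_mono by fastforce
  qed
  moreover have Y2: "norm d2 powr q \<le> ((if m = n - 1 then 1 else 0) + (if m = n + D then 1 else 0)) * (if n = 0 then 0 else a (n - 1))"
  proof (cases "n = 0 \<or> P (n - 1) = P n")
    case True
    then show ?thesis unfolding d2_def a_def by (cases "n = 0") simp_all
  next
    case False
    then have "m = n - 1 \<or> m = n + D" unfolding P_def by linarith
    then have "1 \<le> ((if m = n - 1 then 1 else 0) + (if m = n + D then 1 else 0) :: real)" by auto
    moreover have "norm d2 powr q = (if n = 0 then 0 else a (n - 1))" using False unfolding d2_def a_def by (simp add: norm_mult ind_diff_norm)
    moreover have "0 \<le> (if n = 0 then 0 else a (n - 1))" unfolding a_def by simp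
    ultimately show ?thesis using mult_right_mono by fastforce
  qed
  ultimately show ?thesis
  proof -
    assume A1: "norm (H_plus lam \<alpha> \<psi> (win D m x) n) powr q \<le> ((t+s)/t) powr (q-1) * norm v powr q + ((t+s)/s) powr (q-1) * norm (d1 + d2) powr q"
      and A2: "norm v powr q = (if P n then norm (H_plus lam \<alpha> \<psi> x n) powr q else 0)"
      and A3: "norm (d1 + d2) powr q \<le> 2 powr (q-1) * norm d1 powr q + 2 powr (q-1) * norm d2 powr q"
    define F1 where "F1 = ((if m = n then 1 else 0) + (if m = n + D + 1 then 1 else 0)) * a (Suc n)"
    define F2 where "F2 = ((if m = n - 1 then 1 else 0) + (if m = n + D then 1 else 0)) * (if n = 0 then 0 else a (n - 1))"
    have "2 powr (q-1) * norm d1 powr q + 2 powr (q-1) * norm d2 powr q \<le> 2 powr (q-1) * (F1 + F2)"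
      using Y1 Y2 unfolding F1_def F2_def distrib_left by (intro add_mono mult_left_mono) auto
    then have "norm (d1 + d2) powr q \<le> 2 powr (q-1) * (F1 + F2)" using A3 by linarith
    then have "((t+s)/s) powr (q-1) * norm (d1 + d2) powr q \<le> ((t+s)/s) powr (q-1) * (2 powr (q-1) * (F1 + F2))"
      by (rule mult_left_mono) simp
    then show ?thesis using A1 A2 unfolding F1_def F2_def by (simp add: mult.assoc)
  qed
qed

lemma idt:
  fixes X t q :: real
  assumes "X > 0" "t > 0"
  shows "(X/t) powr (q-1) * t powr q = X powr (q-1) * t"
proof -
  have "(X/t) powr (q-1) * t powr q = X powr (q-1) * (t powr q / t powr (q-1))"
    by (simp add: powr_divide)
  also have "t powr q / t powr (q-1) = t powr (q - (q-1))" by (simp add: powr_diff)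
  also have "\<dots> = t" using assms by simp
  finally show ?thesis .
qed

lemma cnt1:
  fixes c :: real and D M n :: nat
  assumes "c \<ge> 0"
  shows "(\<Sum>m\<le>M. if m - D \<le> n \<and> n \<le> m then c else 0) \<le> real (D+1) * c"
proof -
  have "(\<Sum>m\<le>M. if m - D \<le> n \<and> n \<le> m then c else 0) \<le> (\<Sum>m\<in>{n..n+D}. if m - D \<le> n \<and> n \<le> m then c else 0)"
    by (rule sum_le_supp) (use assms in auto)
  also have "\<dots> \<le> (\<Sum>m\<in>{n..n+D}. c)" by (rule sum_mono) (use assms in auto)
  also have "\<dots> = real (D+1) * c" by simp
  finally show ?thesis .
qed

lemma cnt2:
  fixes M u w :: nat
  shows "(\<Sum>m\<le>M. ((if m = u then 1 else 0) + (if m = w then 1 else 0)) :: real) \<le> 2"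
proof -
  have "(\<Sum>m\<le>M. ((if m = u then 1 else 0) + (if m = w then 1 else 0)) :: real)
     = (\<Sum>m\<le>M. (if m = u then 1 else 0)) + (\<Sum>m\<le>M. (if m = w then 1 else 0))"
    by (rule sum.distrib)
  also have "\<dots> \<le> 1 + 1" by (intro add_mono) (simp_all add: sum.delta)
  finally show ?thesis by simp
qed

lemma cnt3:
  fixes D M n :: nat and c :: real
  assumes "c \<ge> 0" "n + D \<le> M"
  shows "real (D+1) * c \<le> (\<Sum>m\<le>M. if m - D \<le> n \<and> n \<le> m then c else 0)"
proof -
  have "(\<Sum>m\<in>{n..n+D}. if m - D \<le> n \<and> n \<le> m then c else 0) = (\<Sum>m\<in>{n..n+D}. c)"
    by (rule sum.cong) auto
  then have "real (D+1) * c = (\<Sum>m\<in>{n..n+D}. if m - D \<le> n \<and> n \<le> m then c else 0)"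
    by simp
  also have "\<dots> \<le> (\<Sum>m\<le>M. if m - D \<le> n \<and> n \<le> m then c else 0)"
    by (rule sum_mono2) (use assms in auto)
  finally show ?thesis .
qed

lemma fsum_le_infsum:
  fixes f :: "nat \<Rightarrow> real"
  assumes "f summable_on UNIV" "\<And>n. 0 \<le> f n" "finite F"
  shows "sum f F \<le> infsum f UNIV"
proof -
  have "infsum f F \<le> infsum f UNIV"
    by (rule infsum_mono_neutral) (use assms in auto)
  then show ?thesis using assms by simp
qed

lemma key_fin:
  fixes x :: "nat \<Rightarrow> complex" and D :: nat
  assumes p1: "1 \<le> p" and pf: "p \<noteq> \<infinity>"
    and eps: "\<epsilon> > 2 * (2 / real (D+1)) powr (1 / real_of_ereal p)"
    and xm: "lp_mem p UNIV x" and xn: "lp_norm p UNIV x = 1"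
  shows "\<exists>j. nu_H_section p lam \<alpha> (frac (of_int j * \<alpha>)) D < lp_norm p UNIV (H_plus lam \<alpha> (frac (of_int k * \<alpha>)) x) + \<epsilon>"
proof (rule ccontr)
  define q where "q = real_of_ereal p"
  have q1: "q \<ge> 1" using p_fin[OF p1 pf] q_def by simp
  define T where "T = H_plus lam \<alpha> (frac (of_int k * \<alpha>))"
  define a where "a = (\<lambda>n. norm (x n) powr q)"
  define c where "c = (\<lambda>n. norm (T x n) powr q)"
  define \<nu> where "\<nu> = lp_norm p UNIV (T x)"
  assume "\<not> ?thesis"
  then have H: "\<And>j. \<nu> + \<epsilon> \<le> nu_H_section p lam \<alpha> (frac (of_int j * \<alpha>)) D"
    unfolding \<nu>_def T_def by (simp add: not_less)
  have sa: "a summable_on UNIV" using xm pf unfolding lp_mem_def a_def q_def by simp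
  have a0: "\<And>n. 0 \<le> a n" "\<And>n. 0 \<le> c n" unfolding a_def c_def by simp_all
  have Sa: "infsum a UNIV = 1"
  proof -
    have "infsum a UNIV powr (1/q) = 1" using xn pf unfolding lp_norm_def a_def q_def by simp
    then show ?thesis using lp_fin_pow[OF q1] infsum_nonneg[of UNIV a] a0 by simp
  qed
  have sc: "c summable_on UNIV" unfolding c_def T_def by (rule Hplus_summable[OF q1 sa[unfolded a_def]])
  have \<nu>eq: "\<nu> = infsum c UNIV powr (1/q)" unfolding \<nu>_def c_def lp_norm_def q_def using pf by simp
  have \<nu>0: "\<nu> \<ge> 0" unfolding \<nu>eq by simp
  have \<nu>q: "\<nu> powr q = infsum c UNIV"
  proof -
    have "\<nu> powr q = infsum c UNIV powr (1/q * q)" unfolding \<nu>eq by (simp add: powr_powr)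
    also have "1/q * q = 1" using q1 by simp
    finally show ?thesis using infsum_nonneg[of UNIV c] a0 by simp
  qed
  define s0 where "s0 = 2 * (2 / real (D+1)) powr (1/q)"
  have s0p: "s0 > 0" unfolding s0_def by simp
  have s0q: "real (D+1) * s0 powr q = 2 powr (q-1) * 4"
  proof -
    have "s0 powr q = 2 powr q * ((2 / real (D+1)) powr (1/q)) powr q" unfolding s0_def by (simp add: powr_mult)
    also have "((2 / real (D+1)) powr (1/q)) powr q = 2 / real (D+1)" using q1 by (simp add: powr_powr)
    finally have "real (D+1) * s0 powr q = 2 powr q * 2" by simp
    also have "2 powr q * 2 = 2 powr (q-1) * 4"
    proof -
      have "2 powr q = 2 powr (q-1) * 2 powr 1" using powr_add[of "2::real" "q-1" 1] by simp
      then show ?thesis by simp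
    qed
    finally show ?thesis .
  qed
  have eps': "\<epsilon> > s0" using eps unfolding s0_def q_def .
  define t where "t = \<nu> + (\<epsilon> - s0) / 2"
  have tp: "t > 0" using eps' \<nu>0 unfolding t_def by (simp add: field_simps)
  have tlt: "t + s0 < \<nu> + \<epsilon>" using eps' \<nu>0 unfolding t_def by (simp add: field_simps)
  have tge: "\<nu> \<le> t" using eps' \<nu>0 unfolding t_def by (simp add: field_simps)
  define \<rho> where "\<rho> = ((t + s0) / (\<nu> + \<epsilon>)) powr q"
  have \<rho>1: "\<rho> < 1"
  proof -
    have "((t + s0) / (\<nu> + \<epsilon>)) powr q < 1 powr q"
      using tlt tp s0p q1 by (intro powr_less_mono2) auto
    then show ?thesis unfolding \<rho>_def by simp
  qed
  have "a sums 1" using sa Sa by (metis has_sum_imp_sums has_sum_infsum)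
  then have "eventually (\<lambda>M. \<rho> < (\<Sum>n<M. a n)) sequentially"
    unfolding sums_def by (rule order_tendstoD(1)) (rule \<rho>1)
  then obtain M where M: "\<rho> < (\<Sum>n<M. a n)" by (meson eventually_sequentially order_refl)
  have M2: "(\<Sum>n<M. a n) \<le> (\<Sum>n\<le>M. a n)" by (rule sum_mono2) (auto simp: a0)
  define M' where "M' = M + D"
  define R where "R = Suc M'"
  define P where "P = (\<lambda>m n. m - D \<le> n \<and> n \<le> m)"
  define A where "A = (\<lambda>m. \<Sum>n\<le>R. norm (win D m x n) powr q)"
  define G where "G = (\<lambda>m. \<Sum>n\<le>R. norm (T (win D m x) n) powr q)"
  have claim: "(\<nu> + \<epsilon>) powr q * A m \<le> G m" if "m \<le> M'" for m
    unfolding A_def G_def T_def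
    by (rule win_claim[OF p1 pf q_def _ H]) (use that R_def \<nu>0 eps' s0p in auto)
  have S1: "(\<nu> + \<epsilon>) powr q * (\<Sum>m\<le>M'. A m) \<le> (\<Sum>m\<le>M'. G m)"
    unfolding sum_distrib_left by (rule sum_mono) (simp add: claim)
  have LB: "real (D+1) * (\<Sum>n\<le>M. a n) \<le> (\<Sum>m\<le>M'. A m)"
  proof -
    have Aeq: "norm (win D m x n) powr q = (if P m n then a n else 0)" for m n
      unfolding win_def P_def a_def by simp
    have "real (D+1) * (\<Sum>n\<le>M. a n) = (\<Sum>n\<le>M. real (D+1) * a n)" by (simp add: sum_distrib_left)
    also have "\<dots> \<le> (\<Sum>n\<le>M. \<Sum>m\<le>M'. if P m n then a n else 0)"
      unfolding P_def by (rule sum_mono, rule cnt3) (auto simp: a0 M'_def)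
    also have "\<dots> \<le> (\<Sum>n\<le>R. \<Sum>m\<le>M'. if P m n then a n else 0)"
      by (rule sum_mono2) (auto simp: R_def M'_def a0 intro!: sum_nonneg)
    also have "\<dots> = (\<Sum>m\<le>M'. A m)" unfolding A_def Aeq by (rule sum.swap)
    finally show ?thesis .
  qed
  define P0 where "P0 = ((t+s0)/t) powr (q-1)"
  define Q0 where "Q0 = ((t+s0)/s0) powr (q-1)"
  define a' where "a' = (\<lambda>n. if n = 0 then 0 else a (n - 1))"
  define bnd where "bnd = (\<lambda>m n. P0 * (if P m n then c n else 0)
     + Q0 * 2 powr (q-1) *
       (((if m = n then 1 else 0) + (if m = n + D + 1 then 1 else 0)) * a (Suc n)
        + ((if m = n - 1 then 1 else 0) + (if m = n + D then 1 else 0)) * a' n))"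
  have G_le: "G m \<le> (\<Sum>n\<le>R. bnd m n)" for m
    unfolding G_def bnd_def P0_def Q0_def a'_def P_def a_def c_def T_def
    by (rule sum_mono) (rule pw_bound[OF q1 tp s0p])
  have per_n: "(\<Sum>m\<le>M'. bnd m n) \<le> P0 * (real (D+1) * c n) + Q0 * 2 powr (q-1) * (2 * a (Suc n) + 2 * a' n)" for n
  proof -
    have a'0: "0 \<le> a' n" unfolding a'_def by (simp add: a0)
    have "(\<Sum>m\<le>M'. bnd m n) = P0 * (\<Sum>m\<le>M'. if P m n then c n else 0)
       + Q0 * 2 powr (q-1) * ((\<Sum>m\<le>M'. ((if m = n then 1 else 0) + (if m = n + D + 1 then 1 else 0))) * a (Suc n)
         + (\<Sum>m\<le>M'. ((if m = n - 1 then 1 else 0) + (if m = n + D then 1 else 0))) * a' n)"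
      unfolding bnd_def by (simp only: sum.distrib flip: sum_distrib_left sum_distrib_right)
    also have "\<dots> \<le> P0 * (real (D+1) * c n) + Q0 * 2 powr (q-1) * (2 * a (Suc n) + 2 * a' n)"
    proof -
      have "(\<Sum>m\<le>M'. if P m n then c n else 0) \<le> real (D+1) * c n"
        unfolding P_def by (rule cnt1) (simp add: a0)
      then have i1: "P0 * (\<Sum>m\<le>M'. if P m n then c n else 0) \<le> P0 * (real (D+1) * c n)"
        unfolding P0_def by (rule mult_left_mono) simp
      have "(\<Sum>m\<le>M'. ((if m = n then 1 else 0) + (if m = n + D + 1 then 1 else 0))) * a (Suc n) \<le> 2 * a (Suc n)"
        using cnt2 a0 by (intro mult_right_mono) auto
      moreover have "(\<Sum>m\<le>M'. ((if m = n - 1 then 1 else 0) + (if m = n + D then 1 else 0))) * a' n \<le> 2 * a' n"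
        using cnt2 a'0 by (intro mult_right_mono) auto
      ultimately have i2: "Q0 * 2 powr (q-1) * ((\<Sum>m\<le>M'. ((if m = n then 1 else 0) + (if m = n + D + 1 then 1 else 0))) * a (Suc n)
         + (\<Sum>m\<le>M'. ((if m = n - 1 then 1 else 0) + (if m = n + D then 1 else 0))) * a' n)
         \<le> Q0 * 2 powr (q-1) * (2 * a (Suc n) + 2 * a' n)"
        unfolding Q0_def by (intro mult_left_mono add_mono) auto
      show ?thesis using i1 i2 by linarith
    qed
    finally show ?thesis .
  qed
  have UB: "(\<Sum>m\<le>M'. G m) \<le> P0 * real (D+1) * \<nu> powr q + Q0 * 2 powr (q-1) * 4"
  proof -
    have "(\<Sum>m\<le>M'. G m) \<le> (\<Sum>m\<le>M'. \<Sum>n\<le>R. bnd m n)" by (rule sum_mono) (rule G_le)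
    also have "\<dots> = (\<Sum>n\<le>R. \<Sum>m\<le>M'. bnd m n)" by (rule sum.swap)
    also have "\<dots> \<le> (\<Sum>n\<le>R. P0 * (real (D+1) * c n) + Q0 * 2 powr (q-1) * (2 * a (Suc n) + 2 * a' n))"
      by (rule sum_mono) (rule per_n)
    also have "\<dots> = P0 * real (D+1) * (\<Sum>n\<le>R. c n) + Q0 * 2 powr (q-1) * (2 * (\<Sum>n\<le>R. a (Suc n)) + 2 * (\<Sum>n\<le>R. a' n))"
      by (simp only: sum.distrib mult.assoc flip: sum_distrib_left)
    also have "\<dots> \<le> P0 * real (D+1) * \<nu> powr q + Q0 * 2 powr (q-1) * (2 * 1 + 2 * 1)"
    proof -
      have "(\<Sum>n\<le>R. c n) \<le> \<nu> powr q" unfolding \<nu>q by (rule fsum_le_infsum[OF sc]) (auto simp: a0)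
      then have i1: "P0 * real (D+1) * (\<Sum>n\<le>R. c n) \<le> P0 * real (D+1) * \<nu> powr q"
        unfolding P0_def by (intro mult_left_mono) auto
      have "(\<Sum>n\<le>R. a (Suc n)) \<le> (\<Sum>n\<le>Suc R. a n)" unfolding sum.atMost_Suc_shift[of a] using a0 by simp
      also have "\<dots> \<le> 1" unfolding Sa[symmetric] by (rule fsum_le_infsum[OF sa]) (auto simp: a0)
      finally have j1: "(\<Sum>n\<le>R. a (Suc n)) \<le> 1" .
      have "(\<Sum>n\<le>R. a' n) = (\<Sum>n\<le>M'. a n)" unfolding R_def sum.atMost_Suc_shift[of a'] by (simp add: a'_def)
      also have "\<dots> \<le> 1" unfolding Sa[symmetric] by (rule fsum_le_infsum[OF sa]) (auto simp: a0)
      finally have j2: "(\<Sum>n\<le>R. a' n) \<le> 1" .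
      have "Q0 * 2 powr (q-1) * (2 * (\<Sum>n\<le>R. a (Suc n)) + 2 * (\<Sum>n\<le>R. a' n)) \<le> Q0 * 2 powr (q-1) * (2 * 1 + 2 * 1)"
        using j1 j2 unfolding Q0_def by (intro mult_left_mono) auto
      then show ?thesis using i1 by linarith
    qed
    finally show ?thesis by simp
  qed
  have fin: "P0 * \<nu> powr q \<le> (t + s0) powr (q-1) * t"
  proof -
    have "P0 * \<nu> powr q \<le> P0 * t powr q" unfolding P0_def using \<nu>0 tge q1 by (intro mult_left_mono powr_mono2) auto
    also have "\<dots> = (t + s0) powr (q-1) * t" unfolding P0_def using tp s0p by (intro idt) auto
    finally show ?thesis .
  qed
  have fin2: "Q0 * 2 powr (q-1) * 4 = real (D+1) * ((t + s0) powr (q-1) * s0)"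
  proof -
    have "Q0 * 2 powr (q-1) * 4 = real (D+1) * (Q0 * s0 powr q)" using s0q by (simp add: mult_ac)
    also have "Q0 * s0 powr q = (t + s0) powr (q-1) * s0" unfolding Q0_def using tp s0p by (intro idt) auto
    finally show ?thesis .
  qed
  have "(\<nu> + \<epsilon>) powr q * (real (D+1) * (\<Sum>n\<le>M. a n)) \<le> (\<nu> + \<epsilon>) powr q * (\<Sum>m\<le>M'. A m)"
    using LB by (intro mult_left_mono) auto
  also have "\<dots> \<le> P0 * real (D+1) * \<nu> powr q + Q0 * 2 powr (q-1) * 4" using S1 UB by linarith
  also have "\<dots> \<le> real (D+1) * ((t + s0) powr (q-1) * t) + real (D+1) * ((t + s0) powr (q-1) * s0)"
    using fin fin2 by (simp add: mult_ac mult_left_mono)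
  also have "\<dots> = real (D+1) * (t + s0) powr q"
  proof -
    have "(t + s0) powr (q-1) * t + (t + s0) powr (q-1) * s0 = (t + s0) powr (q-1) * (t + s0) powr 1"
      using tp s0p by (simp add: algebra_simps)
    also have "\<dots> = (t + s0) powr q" using powr_add[of "t + s0" "q-1" 1] by simp
    finally have E: "(t + s0) powr (q-1) * t + (t + s0) powr (q-1) * s0 = (t + s0) powr q" .
    show ?thesis by (subst distrib_left[symmetric]) (simp only: E)
  qed
  finally have X: "(\<nu> + \<epsilon>) powr q * (\<Sum>n\<le>M. a n) \<le> (t + s0) powr q" by simp
  have "(t + s0) powr q = (\<nu> + \<epsilon>) powr q * \<rho>"
    unfolding \<rho>_def using tlt tp s0p by (simp add: powr_divide)
  also have "\<dots> < (\<nu> + \<epsilon>) powr q * (\<Sum>n\<le>M. a n)"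
    using M M2 tlt tp s0p by (intro mult_strict_left_mono) auto
  finally show False using X by simp
qed

lemma tent_lip:
  fixes u v z L :: real
  assumes "L > 0"
  shows "\<bar>max 0 (1 - \<bar>u - z\<bar> / L) - max 0 (1 - \<bar>v - z\<bar> / L)\<bar> \<le> \<bar>u - v\<bar> / L"
proof -
  have e: "(1 - \<bar>u - z\<bar> / L) - (1 - \<bar>v - z\<bar> / L) = (\<bar>v - z\<bar> - \<bar>u - z\<bar>) / L"
    by (simp add: diff_divide_distrib)
  have "\<bar>(1 - \<bar>u - z\<bar> / L) - (1 - \<bar>v - z\<bar> / L)\<bar> = \<bar>\<bar>v - z\<bar> - \<bar>u - z\<bar>\<bar> / L"
    unfolding e using assms by (simp add: abs_divide)
  also have "\<dots> \<le> \<bar>u - v\<bar> / L"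
  proof -
    have "\<bar>\<bar>v - z\<bar> - \<bar>u - z\<bar>\<bar> \<le> \<bar>u - v\<bar>" by (smt (verit))
    then show ?thesis using assms by (intro divide_right_mono) auto
  qed
  finally have "\<bar>(1 - \<bar>u - z\<bar> / L) - (1 - \<bar>v - z\<bar> / L)\<bar> \<le> \<bar>u - v\<bar> / L" .
  moreover have "\<bar>max 0 X - max 0 Y\<bar> \<le> \<bar>X - Y\<bar>" for X Y :: real by (simp add: max_def abs_if)
  ultimately show ?thesis by (meson order_trans)
qed

lemma key_inf:
  fixes x :: "nat \<Rightarrow> complex" and D :: nat
  assumes D0: "D > 0" and eps: "\<epsilon> > 4 / real D"
    and xm: "lp_mem \<infinity> UNIV x" and xn: "lp_norm \<infinity> UNIV x = 1"
  shows "\<exists>j. nu_H_section \<infinity> lam \<alpha> (frac (of_int j * \<alpha>)) D < lp_norm \<infinity> UNIV (H_plus lam \<alpha> (frac (of_int k * \<alpha>)) x) + \<epsilon>"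
proof -
  define T where "T = H_plus lam \<alpha> (frac (of_int k * \<alpha>))"
  have xbdd: "bdd_above (range (\<lambda>n. norm (x n)))" using xm unfolding lp_mem_def by simp
  have xs: "(SUP n. norm (x n)) = 1" using xn unfolding lp_norm_def by simp
  have xb: "norm (x n) \<le> 1" for n using cSUP_upper[of n UNIV "\<lambda>n. norm (x n)"] xbdd xs by simp
  have Txb: "norm (T x n) \<le> 2 + \<bar>lam\<bar>" for n
  proof -
    have "norm (complex_of_real (lam * sturm_v \<alpha> (frac (of_int k * \<alpha>)) (int n)) * x n)
        = \<bar>lam\<bar> * \<bar>sturm_v \<alpha> (frac (of_int k * \<alpha>)) (int n)\<bar> * norm (x n)"
      by (simp add: norm_mult abs_mult)
    also have "\<dots> \<le> \<bar>lam\<bar> * 1 * 1"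
      using sturm_bounds xb by (intro mult_mono) auto
    finally have "norm (complex_of_real (lam * sturm_v \<alpha> (frac (of_int k * \<alpha>)) (int n)) * x n) \<le> \<bar>lam\<bar>" by simp
    moreover have "norm (T x n) \<le> norm (x (Suc n)) + norm (if n = 0 then 0 else x (n - 1)) + norm (complex_of_real (lam * sturm_v \<alpha> (frac (of_int k * \<alpha>)) (int n)) * x n)"
      unfolding T_def H_plus_def by (meson norm_triangle_ineq order_trans add_mono order_refl)
    moreover have "norm (if n = 0 then 0 else x (n - 1)) \<le> 1" using xb by simp
    ultimately show ?thesis using xb[of "Suc n"] by linarith
  qed
  define \<nu> where "\<nu> = lp_norm \<infinity> UNIV (T x)"
  have Tbdd: "bdd_above (range (\<lambda>n. norm (T x n)))" using Txb by (intro bdd_aboveI[of _ "2 + \<bar>lam\<bar>"]) auto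
  have Tnu: "norm (T x n) \<le> \<nu>" for n unfolding \<nu>_def lp_norm_def using cSUP_upper[OF _ Tbdd, of n] by simp
  have \<nu>0: "0 \<le> \<nu>" using Tnu[of 0] norm_ge_zero[of "T x 0"] by linarith
  define L where "L = (D + 2) div 2"
  have L1: "L \<ge> 1" "D \<le> 2 * L" "2 * L \<le> D + 2" unfolding L_def using D0 by auto
  have Lr: "real L > 0" using L1 by simp
  have eL: "2 / real L < \<epsilon>"
  proof -
    have "2 / real L = 4 / (2 * real L)" by simp
    also have "\<dots> \<le> 4 / real D" using L1 D0 by (intro divide_left_mono) auto
    finally show ?thesis using eps by linarith
  qed
  define \<delta> where "\<delta> = (\<epsilon> - 2 / real L) / (\<nu> + \<epsilon>)"
  have num: "0 < \<epsilon> - 2 / real L" using eL by simp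
  have L2: "0 < 2 / real L" using Lr by simp
  have den: "0 < \<nu> + \<epsilon>" using eL L2 \<nu>0 by linarith
  have nd: "\<epsilon> - 2 / real L < \<nu> + \<epsilon>" using L2 \<nu>0 by linarith
  have \<delta>: "0 < \<delta>" "\<delta> < 1"
    unfolding \<delta>_def using num den apply (simp add: divide_pos_pos)
    by (subst divide_less_eq_1_pos[OF den]) (rule nd)
  have "1 - \<delta> < (SUP n. norm (x n))" using xs \<delta> by simp
  then obtain n0 where n0: "1 - \<delta> < norm (x n0)" using less_cSUP_iff[OF _ xbdd] by auto
  define \<phi> where "\<phi> = (\<lambda>n::nat. max 0 (1 - \<bar>real n - real n0\<bar> / real L))"
  have \<phi>b: "0 \<le> \<phi> n" "\<phi> n \<le> 1" for n unfolding \<phi>_def using Lr by auto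
  have \<phi>0: "\<phi> n0 = 1" unfolding \<phi>_def by simp
  have \<phi>z: "\<phi> n = 0" if "real L \<le> \<bar>real n - real n0\<bar>" for n
    unfolding \<phi>_def using that Lr by (simp add: field_simps)
  have \<phi>S: "\<bar>\<phi> (Suc n) - \<phi> n\<bar> \<le> 1 / real L" for n
    unfolding \<phi>_def using tent_lip[OF Lr, of "real (Suc n)" "real n0" "real n"] by simp
  have \<phi>P: "\<bar>\<phi> (n - 1) - \<phi> n\<bar> \<le> 1 / real L" if "n \<noteq> 0" for n
    unfolding \<phi>_def using tent_lip[OF Lr, of "real (n - 1)" "real n0" "real n"] that by (simp add: of_nat_diff)
  define s where "s = n0 - (L - 1)"
  define y where "y = (\<lambda>n. complex_of_real (\<phi> n) * x n)"
  have supp: "y n = 0" if "n < s \<or> s + D < n" for n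
  proof -
    have "real L \<le> \<bar>real n - real n0\<bar>" using that L1 unfolding s_def by auto
    then show ?thesis unfolding y_def using \<phi>z by simp
  qed
  define W where "W = lp_norm \<infinity> {0..D} (\<lambda>m. y (m + s))"
  have Wge: "norm (x n0) \<le> W"
  proof -
    have mem: "n0 - s \<in> {0..D}" unfolding s_def using L1 by auto
    have "norm (y (n0 - s + s)) \<le> W" unfolding W_def lp_norm_inf
      by (rule cSUP_upper[OF mem]) (auto intro: bdd_above_finite)
    moreover have "n0 - s + s = n0" unfolding s_def by simp
    ultimately show ?thesis unfolding y_def using \<phi>0 by simp
  qed
  have Wp: "W > 0" using Wge n0 \<delta> by linarith
  have Tyb: "norm (T y n) \<le> \<nu> + 2 / real L" for n
  proof -
    define e1 where "e1 = complex_of_real (\<phi> (Suc n) - \<phi> n) * x (Suc n)"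
    define e2 where "e2 = (if n = 0 then 0 else complex_of_real (\<phi> (n - 1) - \<phi> n) * x (n - 1))"
    have eq: "T y n = complex_of_real (\<phi> n) * T x n + e1 + e2"
      unfolding T_def H_plus_def y_def e1_def e2_def by (simp add: algebra_simps)
    have "norm (complex_of_real (\<phi> n) * T x n) \<le> \<nu>"
    proof -
      have "norm (complex_of_real (\<phi> n) * T x n) = \<phi> n * norm (T x n)" using \<phi>b[of n] by (simp add: norm_mult)
      also have "\<dots> \<le> 1 * \<nu>" using \<phi>b[of n] Tnu[of n] by (intro mult_mono) auto
      finally show ?thesis by simp
    qed
    moreover have "norm e1 \<le> 1 / real L"
    proof -
      have "norm e1 = \<bar>\<phi> (Suc n) - \<phi> n\<bar> * norm (x (Suc n))" unfolding e1_def norm_mult norm_of_real ..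
      also have "\<dots> \<le> (1 / real L) * 1" using \<phi>S[of n] xb[of "Suc n"] by (intro mult_mono) auto
      finally show ?thesis by simp
    qed
    moreover have "norm e2 \<le> 1 / real L"
    proof (cases "n = 0")
      case True then show ?thesis unfolding e2_def using Lr by simp
    next
      case False
      have "norm e2 = \<bar>\<phi> (n - 1) - \<phi> n\<bar> * norm (x (n - 1))" unfolding e2_def using False by (simp only: norm_mult norm_of_real if_False)
      also have "\<dots> \<le> (1 / real L) * 1" using \<phi>P[OF False] xb[of "n - 1"] by (intro mult_mono) auto
      finally show ?thesis by simp
    qed
    moreover have "norm (T y n) \<le> norm (complex_of_real (\<phi> n) * T x n) + norm e1 + norm e2"
      unfolding eq by (meson norm_triangle_ineq order_trans add_mono order_refl)
    ultimately show ?thesis by simp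
  qed
  have Lb: "lp_norm \<infinity> {0..D+1} (\<lambda>m. T y (m + s)) \<le> \<nu> + 2 / real L"
    unfolding lp_norm_inf using Tyb by (simp add: cSUP_least)
  have "nu_H_section \<infinity> lam \<alpha> (frac (of_int (k + int s) * \<alpha>)) D \<le> lp_norm \<infinity> {0..D+1} (\<lambda>m. T y (m + s)) / W"
    unfolding T_def W_def by (rule window) (use supp Wp W_def in auto)
  also have "\<dots> \<le> (\<nu> + 2 / real L) / W" using Lb Wp by (simp add: divide_right_mono)
  also have "\<dots> \<le> (\<nu> + 2 / real L) / norm (x n0)"
  proof -
    have xp: "0 < norm (x n0)" using n0 \<delta> by linarith
    have "0 \<le> \<nu> + 2 / real L" using \<nu>0 Lr by simp
    moreover have "0 < W * norm (x n0)" using Wp xp by simp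
    ultimately show ?thesis using Wge by (intro divide_left_mono) auto
  qed
  also have "\<dots> < (\<nu> + 2 / real L) / (1 - \<delta>)"
  proof -
    have p1: "0 < \<nu> + 2 / real L" using \<nu>0 Lr by (simp add: add_nonneg_pos)
    have "0 < norm (x n0)" "0 < 1 - \<delta>" using n0 \<delta> by linarith+
    then have p2: "0 < norm (x n0) * (1 - \<delta>)" by (rule mult_pos_pos)
    show ?thesis using p1 p2 n0 by (intro divide_strict_left_mono) auto
  qed
  also have "(\<nu> + 2 / real L) / (1 - \<delta>) = \<nu> + \<epsilon>"
  proof -
    have one: "(\<nu> + \<epsilon>) / (\<nu> + \<epsilon>) = 1" using den by simp
    have "1 - \<delta> = (\<nu> + \<epsilon>) / (\<nu> + \<epsilon>) - (\<epsilon> - 2 / real L) / (\<nu> + \<epsilon>)"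
      unfolding \<delta>_def one ..
    also have "\<dots> = ((\<nu> + \<epsilon>) - (\<epsilon> - 2 / real L)) / (\<nu> + \<epsilon>)"
      by (rule diff_divide_distrib[symmetric])
    also have "(\<nu> + \<epsilon>) - (\<epsilon> - 2 / real L) = \<nu> + 2 / real L" by simp
    finally have e: "1 - \<delta> = (\<nu> + 2 / real L) / (\<nu> + \<epsilon>)" .
    have p1: "0 < \<nu> + 2 / real L" using \<nu>0 Lr by (simp add: add_nonneg_pos)
    show ?thesis unfolding e using p1 den by simp
  qed
  finally show ?thesis unfolding \<nu>_def T_def by blast
qed

lemma delta_gen:
  fixes f :: "'a \<Rightarrow> real"
  assumes "finite F" "\<And>n. n \<notin> F \<Longrightarrow> f n = 0"
  shows "f summable_on UNIV" "infsum f UNIV = sum f F"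
proof -
  have "f summable_on UNIV \<longleftrightarrow> f summable_on F"
    by (rule summable_on_cong_neutral) (use assms in auto)
  then show "f summable_on UNIV" using assms by simp
  have "infsum f UNIV = infsum f F"
    by (rule infsum_cong_neutral) (use assms in auto)
  then show "infsum f UNIV = sum f F" using assms by simp
qed

lemma Hplus_set_nonempty:
  assumes p1: "1 \<le> p"
  shows "{lp_norm p UNIV (H_plus lam \<alpha> \<psi> x) | x. lp_mem p UNIV x \<and> lp_norm p UNIV x = 1} \<noteq> {}"
proof -
  define d where "d = (\<lambda>n::nat. if n = 0 then 1 else 0 :: complex)"
  have "lp_mem p UNIV d \<and> lp_norm p UNIV d = 1"
  proof (cases "p = \<infinity>")
    case True
    have "bdd_above (range (\<lambda>n. norm (d n)))" unfolding d_def by (intro bdd_aboveI[of _ 1]) auto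
    moreover have "(SUP n. norm (d n)) = 1"
    proof (rule antisym)
      show "(SUP n. norm (d n)) \<le> 1" unfolding d_def by (rule cSUP_least) auto
      have "norm (d 0) \<le> (SUP n. norm (d n))"
        by (rule cSUP_upper) (auto simp: d_def intro!: bdd_aboveI[of _ 1])
      then show "1 \<le> (SUP n. norm (d n))" by (simp add: d_def)
    qed
    ultimately show ?thesis using True unfolding lp_mem_def lp_norm_def by simp
  next
    case False
    have eqf: "(\<lambda>n. norm (d n) powr real_of_ereal p) = (\<lambda>n. if n = 0 then 1 else 0)"
      unfolding d_def by auto
    have "(\<lambda>n. norm (d n) powr real_of_ereal p) summable_on UNIV"
      unfolding eqf by (rule delta_gen(1)[of "{0}"]) auto
    moreover have "infsum (\<lambda>n. norm (d n) powr real_of_ereal p) UNIV = 1"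
      unfolding eqf by (subst delta_gen(2)[of "{0}"]) auto
    ultimately show ?thesis using False unfolding lp_mem_def lp_norm_def by simp
  qed
  then have "lp_norm p UNIV (H_plus lam \<alpha> \<psi> d) \<in> {lp_norm p UNIV (H_plus lam \<alpha> \<psi> x) | x. lp_mem p UNIV x \<and> lp_norm p UNIV x = 1}"
    by (intro CollectI exI[of _ d]) simp
  then show ?thesis by (metis empty_iff)
qed

theorem lemma6p6:
  fixes \<alpha> \<theta> lam \<epsilon> :: real and p :: ereal and D :: nat
  assumes "\<alpha> \<in> {0..1}" and "\<alpha> \<notin> \<rat>"
    and "\<theta> \<in> {0..<1}"
    and "1 \<le> p"
    and "\<epsilon> > 0" and "D > 0"
    and "p \<noteq> \<infinity> \<Longrightarrow> \<epsilon> > 2 * H_opnorm p lam \<alpha> 0 * (4 / real D) powr (1 / real_of_ereal p)"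
    and "p = \<infinity> \<Longrightarrow> \<epsilon> > 2 * H_opnorm p lam \<alpha> 0 / real D"
  shows "(INF k::int. nu_H_plus p lam \<alpha> (frac (of_int k * \<alpha>)))
           \<ge> (INF k::int. nu_H_section p lam \<alpha> (frac (of_int k * \<alpha>)) D) - \<epsilon>"
proof -
  have al: "\<alpha> < 1"
  proof -
    have "\<alpha> \<noteq> 1" using assms(2) by auto
    then show ?thesis using assms(1) by simp
  qed
  define IS where "IS = (INF k::int. nu_H_section p lam \<alpha> (frac (of_int k * \<alpha>)) D)"
  have bddS: "bdd_below (range (\<lambda>k::int. nu_H_section p lam \<alpha> (frac (of_int k * \<alpha>)) D))"
    using nu_section_nonneg by (intro bdd_belowI[of _ 0]) auto
  have key: "\<exists>j. nu_H_section p lam \<alpha> (frac (of_int j * \<alpha>)) D < lp_norm p UNIV (H_plus lam \<alpha> (frac (of_int k * \<alpha>)) x) + \<epsilon>"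
    if xm: "lp_mem p UNIV x" and xn: "lp_norm p UNIV x = 1" for k x
  proof (cases "p = \<infinity>")
    case True
    have Dp: "real D > 0" using assms(6) by simp
    have "4 / real D \<le> 2 * H_opnorm p lam \<alpha> 0 / real D"
      using opnorm_inf[OF al, of lam] True Dp by (intro divide_right_mono) auto
    then have e: "\<epsilon> > 4 / real D" using assms(8)[OF True] by linarith
    show ?thesis using key_inf[OF assms(6) e, of x lam \<alpha> k] xm xn True by simp
  next
    case False
    define q where "q = real_of_ereal p"
    have q1: "q \<ge> 1" using p_fin[OF assms(4) False] q_def by simp
    have Dp: "real D > 0" using assms(6) by simp
    have H1: "H_opnorm p lam \<alpha> 0 \<ge> 1" by (rule opnorm_fin[OF assms(4) False al])
    have "(2 / real (D+1)) powr (1/q) \<le> (4 / real D) powr (1/q)"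
    proof (rule powr_mono2)
      show "2 / real (D+1) \<le> 4 / real D" using Dp by (simp add: field_simps)
    qed (use q1 in auto)
    also have "\<dots> \<le> H_opnorm p lam \<alpha> 0 * (4 / real D) powr (1/q)"
      using mult_right_mono[OF H1, of "(4 / real D) powr (1/q)"] by simp
    finally have "2 * (2 / real (D+1)) powr (1/q) \<le> 2 * H_opnorm p lam \<alpha> 0 * (4 / real D) powr (1/q)"
      by simp
    then have e: "\<epsilon> > 2 * (2 / real (D+1)) powr (1 / real_of_ereal p)"
      using assms(7)[OF False] unfolding q_def by linarith
    show ?thesis by (rule key_fin[OF assms(4) False e xm xn])
  qed
  have "IS - \<epsilon> \<le> nu_H_plus p lam \<alpha> (frac (of_int k * \<alpha>))" for k :: int
    unfolding nu_H_plus_def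
  proof (rule cInf_greatest)
    show "{lp_norm p UNIV (H_plus lam \<alpha> (frac (of_int k * \<alpha>)) x) | x. lp_mem p UNIV x \<and> lp_norm p UNIV x = 1} \<noteq> {}"
      by (rule Hplus_set_nonempty[OF assms(4)])
    fix y assume "y \<in> {lp_norm p UNIV (H_plus lam \<alpha> (frac (of_int k * \<alpha>)) x) | x. lp_mem p UNIV x \<and> lp_norm p UNIV x = 1}"
    then obtain x where y: "y = lp_norm p UNIV (H_plus lam \<alpha> (frac (of_int k * \<alpha>)) x)"
      and x: "lp_mem p UNIV x" "lp_norm p UNIV x = 1" by blast
    obtain j where j: "nu_H_section p lam \<alpha> (frac (of_int j * \<alpha>)) D < y + \<epsilon>"
      using key[OF x, of k] y by blast
    have "IS \<le> nu_H_section p lam \<alpha> (frac (of_int j * \<alpha>)) D"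
      unfolding IS_def by (rule cINF_lower[OF bddS]) simp
    then show "IS - \<epsilon> \<le> y" using j by linarith
  qed
  then have "IS - \<epsilon> \<le> (INF k::int. nu_H_plus p lam \<alpha> (frac (of_int k * \<alpha>)))"
    by (intro cINF_greatest) auto
  then show ?thesis unfolding IS_def by simp
qed

end
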